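(* Let $\mu$ be a monotone system over $\{0,1\}^V$, $\theta\in(0,1)$ and $T_2\ge1$. For $t\ge1$ define $P^{(t)}_{\mathrm{alg}}=P_{\mathrm{cl}}P_{\mathrm{s\text{-}GD}}$ and $P^{(t)}_{\pi\text{-mGD}}=P_{\mathrm{cl}}P_{\pi\text{-GD}}$ if $(t-1)\bmod T_2=0$, and $P^{(t)}_{\mathrm{alg}}=P_{\mathrm{s\text{-}GD}}$, $P^{(t)}_{\pi\text{-mGD}}=P_{\pi\text{-GD}}$ otherwise. Then $P^{(t)}_{\pi\text{-mGD}}\preceq_{\mathrm{mc}}P^{(t)}_{\mathrm{alg}}$ for all $t\ge1$.
   Context: Monotone system: for every $v$ and all feasible $\sigma\preceq\tau$ in $\{0,1\}^{V\setminus\{v\}}$ (coordinatewise), $\mu^\sigma_v(1)\le\mu^\tau_v(1)$. Tilted $(\theta*\mu)(\sigma)\propto\mu(\sigma)\theta^{\|\sigma\|_1}$. $\mathsf{lift}$: random map $\{0,1\}^V\to\{0,1,\star\}^V$, independently per coordinate $0\mapsto0$, $1\mapsto\star$ w.p. $1-\theta$, $1\mapsto1$ w.p. $\theta$. $\mathsf{contr}$: $0\mapsto0$, $1,\star\mapsto1$. $\pi$: law of $\mathsf{lift}(X)$, $X\sim\mu$, support $\Omega(\pi)$. $P_{\pi\text{-GD}}$: pick $v$ uniformly, resample $X_v$ from $\pi$ given $X_{V\setminus\{v\}}$. $P_{\mathrm{cl}}$: $X\mapsto\mathsf{lift}(\mathsf{contr}(X))$. $P_{\mathrm{s\text{-}GD}}$: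 pick $v$ uniformly; if $X_v=\star$ keep it; otherwise resample $X_v\in\{0,1\}$ from $(\theta*\mu)_v^{\sigma_{V\setminus\{v\}}}$, $\sigma=\mathsf{contr}(X)$. The product $PQ$ means apply $P$ then $Q$. Order $0<1<\star$, coordinatewise partial order. $f:\Omega(\pi)\to\mathbb R_{\ge0}$ is increasing if $X\preceq Y\Rightarrow f(X)\le f(Y)$; $\nu\preceq_{\mathrm{sd}}\nu'$ iff $\mathbb E_\nu f\le\mathbb E_{\nu'}f$ for all increasing $f$. $\mathcal{MC}_\pi$: chains reversible w.r.t. $\pi$ and stochastically monotone ($Pf$ increasing whenever $f$ is). For $P,Q\in\mathcal{MC}_\pi$, $P\preceq_{\mathrm{mc}}Q$ iff for every distribution $\nu$ on $\Omega(\pi)$ such that $\sigma\mapsto\nu(\sigma)/\pi(\sigma)$ is increasing, $\nu P\preceq_{\mathrm{sd}}\nu Q$. *)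

theory Defs
  imports Complex_Main
begin

datatype spin3 = Zero | One | Star

lemma UNIV_spin3: "(UNIV :: spin3 set) = {Zero, One, Star}"
  using spin3.exhaust by auto

instance spin3 :: finite
  by standard (simp add: UNIV_spin3)

fun rank3 :: "spin3 \<Rightarrow> nat" where
  "rank3 Zero = 0" | "rank3 One = 1" | "rank3 Star = 2"

definition conf_le :: "('v \<Rightarrow> spin3) \<Rightarrow> ('v \<Rightarrow> spin3) \<Rightarrow> bool" where
  "conf_le X Y \<longleftrightarrow> (\<forall>v. rank3 (X v) \<le> rank3 (Y v))"

text \<open>Configurations in {0,1}^V are 'v \<Rightarrow> bool (True = 1); a distribution is a
  function to the reals.\<close>

definition feasible :: "(('v \<Rightarrow> bool) \<Rightarrow> real) \<Rightarrow> 'v \<Rightarrow> ('v \<Rightarrow> bool) \<Rightarrow> bool" where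
  "feasible mu v \<sigma> \<longleftrightarrow> mu (\<sigma>(v := True)) + mu (\<sigma>(v := False)) > 0"

definition cond1 :: "(('v \<Rightarrow> bool) \<Rightarrow> real) \<Rightarrow> 'v \<Rightarrow> ('v \<Rightarrow> bool) \<Rightarrow> real" where
  "cond1 mu v \<sigma> = mu (\<sigma>(v := True)) / (mu (\<sigma>(v := True)) + mu (\<sigma>(v := False)))"

definition is_distr :: "('a::finite \<Rightarrow> real) \<Rightarrow> bool" where
  "is_distr mu \<longleftrightarrow> (\<forall>x. mu x \<ge> 0) \<and> (\<Sum>x\<in>UNIV. mu x) = 1"

definition monotone_system :: "(('v::finite \<Rightarrow> bool) \<Rightarrow> real) \<Rightarrow> bool" where
  "monotone_system mu \<longleftrightarrow> is_distr mu \<and>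
     (\<forall>v \<sigma> \<tau>. (\<forall>u. u \<noteq> v \<longrightarrow> (\<sigma> u \<longrightarrow> \<tau> u)) \<and> feasible mu v \<sigma> \<and> feasible mu v \<tau>
        \<longrightarrow> cond1 mu v \<sigma> \<le> cond1 mu v \<tau>)"

definition tilt :: "real \<Rightarrow> (('v::finite \<Rightarrow> bool) \<Rightarrow> real) \<Rightarrow> ('v \<Rightarrow> bool) \<Rightarrow> real" where
  "tilt \<theta> mu \<sigma> = mu \<sigma> * \<theta> ^ card {v. \<sigma> v} /
     (\<Sum>\<tau>\<in>UNIV. mu \<tau> * \<theta> ^ card {v. \<tau> v})"

definition contr :: "('v \<Rightarrow> spin3) \<Rightarrow> ('v \<Rightarrow> bool)" where
  "contr X = (\<lambda>v. X v \<noteq> Zero)"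

fun lift1 :: "real \<Rightarrow> bool \<Rightarrow> spin3 \<Rightarrow> real" where
  "lift1 \<theta> False c = (if c = Zero then 1 else 0)"
| "lift1 \<theta> True Zero = 0"
| "lift1 \<theta> True One = \<theta>"
| "lift1 \<theta> True Star = 1 - \<theta>"

definition lift_prob :: "real \<Rightarrow> ('v::finite \<Rightarrow> bool) \<Rightarrow> ('v \<Rightarrow> spin3) \<Rightarrow> real" where
  "lift_prob \<theta> \<sigma> X = (\<Prod>v\<in>UNIV. lift1 \<theta> (\<sigma> v) (X v))"

definition pi_lift :: "real \<Rightarrow> (('v::finite \<Rightarrow> bool) \<Rightarrow> real) \<Rightarrow> ('v \<Rightarrow> spin3) \<Rightarrow> real" where
  "pi_lift \<theta> mu X = (\<Sum>\<sigma>\<in>UNIV. mu \<sigma> * lift_prob \<theta> \<sigma> X)"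

definition Omega :: "(('v \<Rightarrow> spin3) \<Rightarrow> real) \<Rightarrow> ('v \<Rightarrow> spin3) set" where
  "Omega p = {X. p X > 0}"

type_synonym 'v chain = "('v \<Rightarrow> spin3) \<Rightarrow> ('v \<Rightarrow> spin3) \<Rightarrow> real"

definition mprod :: "'v::finite chain \<Rightarrow> 'v chain \<Rightarrow> 'v chain" where
  "mprod P Q X Z = (\<Sum>Y\<in>UNIV. P X Y * Q Y Z)"

definition P_piGD :: "real \<Rightarrow> (('v::finite \<Rightarrow> bool) \<Rightarrow> real) \<Rightarrow> 'v chain" where
  "P_piGD \<theta> mu X Y = (1 / real (card (UNIV :: 'v set))) *
     (\<Sum>v\<in>UNIV. if (\<forall>u. u \<noteq> v \<longrightarrow> Y u = X u)
        then pi_lift \<theta> mu Y / (\<Sum>c\<in>UNIV. pi_lift \<theta> mu (X(v := c))) else 0)"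

definition P_cl :: "real \<Rightarrow> 'v::finite chain" where
  "P_cl \<theta> X Y = lift_prob \<theta> (contr X) Y"

definition P_sGD :: "real \<Rightarrow> (('v::finite \<Rightarrow> bool) \<Rightarrow> real) \<Rightarrow> 'v chain" where
  "P_sGD \<theta> mu X Y = (1 / real (card (UNIV :: 'v set))) *
     (\<Sum>v\<in>UNIV. if X v = Star then (if Y = X then 1 else 0)
        else (let q = cond1 (tilt \<theta> mu) v (contr X) in
              (if Y = X(v := One) then q else 0) + (if Y = X(v := Zero) then 1 - q else 0)))"

definition P_alg :: "real \<Rightarrow> (('v::finite \<Rightarrow> bool) \<Rightarrow> real) \<Rightarrow> nat \<Rightarrow> nat \<Rightarrow> 'v chain" where
  "P_alg \<theta> mu T2 t = (if (t - 1) mod T2 = 0 then mprod (P_cl \<theta>) (P_sGD \<theta> mu) else P_sGD \<theta> mu)"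

definition P_pimGD :: "real \<Rightarrow> (('v::finite \<Rightarrow> bool) \<Rightarrow> real) \<Rightarrow> nat \<Rightarrow> nat \<Rightarrow> 'v chain" where
  "P_pimGD \<theta> mu T2 t = (if (t - 1) mod T2 = 0 then mprod (P_cl \<theta>) (P_piGD \<theta> mu) else P_piGD \<theta> mu)"

definition increasing_on :: "('v \<Rightarrow> spin3) set \<Rightarrow> (('v \<Rightarrow> spin3) \<Rightarrow> real) \<Rightarrow> bool" where
  "increasing_on S f \<longleftrightarrow> (\<forall>X\<in>S. f X \<ge> 0) \<and>
     (\<forall>X\<in>S. \<forall>Y\<in>S. conf_le X Y \<longrightarrow> f X \<le> f Y)"

definition sd_le :: "('v \<Rightarrow> spin3) set \<Rightarrow> (('v \<Rightarrow> spin3) \<Rightarrow> real) \<Rightarrow> (('v \<Rightarrow> spin3) \<Rightarrow> real) \<Rightarrow> bool" where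
  "sd_le S \<nu> \<nu>' \<longleftrightarrow> (\<forall>f. increasing_on S f \<longrightarrow> (\<Sum>Y\<in>S. \<nu> Y * f Y) \<le> (\<Sum>Y\<in>S. \<nu>' Y * f Y))"

definition push :: "(('v::finite \<Rightarrow> spin3) \<Rightarrow> real) \<Rightarrow> 'v chain \<Rightarrow> ('v \<Rightarrow> spin3) \<Rightarrow> real" where
  "push \<nu> P Y = (\<Sum>X\<in>UNIV. \<nu> X * P X Y)"

definition distr_on :: "('v \<Rightarrow> spin3) set \<Rightarrow> (('v \<Rightarrow> spin3) \<Rightarrow> real) \<Rightarrow> bool" where
  "distr_on S \<nu> \<longleftrightarrow> (\<forall>X. \<nu> X \<ge> 0) \<and> (\<forall>X. X \<notin> S \<longrightarrow> \<nu> X = 0) \<and> (\<Sum>X\<in>S. \<nu> X) = 1"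

definition mc_le :: "(('v::finite \<Rightarrow> spin3) \<Rightarrow> real) \<Rightarrow> 'v chain \<Rightarrow> 'v chain \<Rightarrow> bool" where
  "mc_le p P Q \<longleftrightarrow> (\<forall>\<nu>. distr_on (Omega p) \<nu> \<and> increasing_on (Omega p) (\<lambda>X. \<nu> X / p X)
      \<longrightarrow> sd_le (Omega p) (push \<nu> P) (push \<nu> Q))"

end

theory Submission
  imports Defs "HOL-Library.FuncSet"
begin

lemma lift1_nonneg: "0 \<le> \<theta> \<Longrightarrow> \<theta> \<le> 1 \<Longrightarrow> 0 \<le> lift1 \<theta> b c"
  by (cases b; cases c) auto

lemma lift1_pos: "0 < \<theta> \<Longrightarrow> \<theta> < 1 \<Longrightarrow> 0 < lift1 \<theta> (c \<noteq> Zero) c"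
  by (cases c) auto

lemma lift1_zero: "b \<noteq> (c \<noteq> Zero) \<Longrightarrow> lift1 \<theta> b c = 0"
  by (cases b; cases c) auto

lemma lift1_sum: "(\<Sum>c\<in>UNIV. lift1 \<theta> b c) = 1"
  by (cases b) (auto simp: UNIV_spin3)

lemma lift_prob_nonneg: "0 \<le> \<theta> \<Longrightarrow> \<theta> \<le> 1 \<Longrightarrow> 0 \<le> lift_prob \<theta> \<sigma> X"
  unfolding lift_prob_def by (intro prod_nonneg) (auto intro: lift1_nonneg)

lemma lift_prob_pos: "0 < \<theta> \<Longrightarrow> \<theta> < 1 \<Longrightarrow> 0 < lift_prob \<theta> (contr X) X"
  unfolding lift_prob_def contr_def by (intro prod_pos) (auto intro: lift1_pos)

lemma lift_prob_zero: "\<sigma> \<noteq> contr X \<Longrightarrow> lift_prob \<theta> \<sigma> X = 0"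
proof -
  assume "\<sigma> \<noteq> contr X"
  then obtain v where "\<sigma> v \<noteq> (X v \<noteq> Zero)" unfolding contr_def by auto
  then have "lift1 \<theta> (\<sigma> v) (X v) = 0" by (rule lift1_zero)
  then show ?thesis unfolding lift_prob_def by (intro prod_zero) auto
qed

lemma lift_prob_sum: "(\<Sum>X\<in>UNIV. lift_prob \<theta> \<sigma> X) = 1"
proof -
  have "(\<Prod>v\<in>(UNIV::'a set). \<Sum>c\<in>UNIV. lift1 \<theta> (\<sigma> v) c) = (\<Sum>X\<in>PiE UNIV (\<lambda>_. UNIV). \<Prod>v\<in>UNIV. lift1 \<theta> (\<sigma> v) (X v))"
    by (rule prod_sum_PiE) auto
  then show ?thesis unfolding lift_prob_def by (simp add: lift1_sum)
qed

lemma pi_lift_eq: "pi_lift \<theta> mu X = mu (contr X) * lift_prob \<theta> (contr X) X"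
  unfolding pi_lift_def
  by (subst sum.remove[of _ "contr X"]) (auto simp: lift_prob_zero)

lemma contr_upd: "contr (X(v := c)) = (contr X)(v := (c \<noteq> Zero))"
  unfolding contr_def by auto

lemma lift_prob_upd: "lift_prob \<theta> \<sigma> (X(v := c)) = lift1 \<theta> (\<sigma> v) c * (\<Prod>u\<in>UNIV-{v}. lift1 \<theta> (\<sigma> u) (X u))"
  unfolding lift_prob_def
  by (subst prod.remove[of _ v]) (auto intro!: prod.cong)

lemma pi_upd: "pi_lift \<theta> mu (X(v := c)) = mu ((contr X)(v := (c \<noteq> Zero))) * lift1 \<theta> (c \<noteq> Zero) c * (\<Prod>u\<in>UNIV-{v}. lift1 \<theta> (contr X u) (X u))"
  unfolding pi_lift_eq contr_upd lift_prob_upd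
  by (auto intro!: prod.cong simp: contr_def)

lemma key_ineq:
  fixes p0 p1 ps g0 g1 gs F0 F1 Fs :: real
  assumes "p0 \<ge> 0" "p1 \<ge> 0" "ps \<ge> 0" "ps > 0 \<longleftrightarrow> p1 > 0"
    and "ps > 0 \<Longrightarrow> g1 \<le> gs" "ps > 0 \<Longrightarrow> F1 \<le> Fs"
    and "p0 > 0 \<Longrightarrow> p1 > 0 \<Longrightarrow> g0 \<le> g1" "p0 > 0 \<Longrightarrow> p1 > 0 \<Longrightarrow> F0 \<le> F1"
  shows "(g0*p0 + g1*p1 + gs*ps) * ((p0*F0 + p1*F1 + ps*Fs)/(p0+p1+ps))
    \<le> gs*ps*Fs + (g0*p0+g1*p1)*(p1/(p0+p1)*F1 + (1 - p1/(p0+p1))*F0)"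
proof (cases "ps > 0")
  case False
  then have "ps = 0" "p1 = 0" using assms by auto
  then show ?thesis using assms(1) by (cases "p0 = 0") auto
next
  case True
  then have p1: "p1 > 0" using assms by auto
  define s where "s = p0 + p1"
  define A where "A = g0*p0 + g1*p1"
  define B where "B = p0*F0 + p1*F1"
  have s: "s > 0" using p1 assms(1) unfolding s_def by auto
  have S: "s + ps > 0" using s True by auto
  have A: "s*gs - A \<ge> 0"
  proof -
    have "s*gs - A = p0*(gs-g0) + p1*(gs-g1)" unfolding s_def A_def by (simp add: algebra_simps)
    moreover have "p0*(gs-g0) \<ge> 0"
      using assms(1,5,7) True p1 by (cases "p0 > 0") (auto intro!: mult_nonneg_nonneg)
    moreover have "p1*(gs-g1) \<ge> 0" using assms(5) True p1 by auto
    ultimately show ?thesis by linarith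
  qed
  have B: "s*Fs - B \<ge> 0"
  proof -
    have "s*Fs - B = p0*(Fs-F0) + p1*(Fs-F1)" unfolding s_def B_def by (simp add: algebra_simps)
    moreover have "p0*(Fs-F0) \<ge> 0"
      using assms(1,6,8) True p1 by (cases "p0 > 0") (auto intro!: mult_nonneg_nonneg)
    moreover have "p1*(Fs-F1) \<ge> 0" using assms(6) True p1 by auto
    ultimately show ?thesis by linarith
  qed
  have eq: "gs*ps*Fs + (g0*p0+g1*p1)*(p1/(p0+p1)*F1 + (1 - p1/(p0+p1))*F0)
     - (g0*p0 + g1*p1 + gs*ps) * ((p0*F0 + p1*F1 + ps*Fs)/(p0+p1+ps))
     = ps*(s*gs - A)*(s*Fs - B)/((s+ps)*s)"
  proof -
    have ne: "p0 + p1 \<noteq> 0" using s s_def by simp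
    have e1: "1 - p1/(p0+p1) = p0/(p0+p1)" using ne by (simp add: field_simps)
    have "p1/(p0+p1)*F1 + (1 - p1/(p0+p1))*F0 = (p0*F0 + p1*F1)/(p0+p1)"
      unfolding e1 by (simp add: add_divide_distrib algebra_simps)
    then have "p1/(p0+p1)*F1 + (1 - p1/(p0+p1))*F0 = B/s" unfolding s_def B_def .
    then have "(g0*p0+g1*p1)*(p1/(p0+p1)*F1 + (1 - p1/(p0+p1))*F0) = A*B/s"
      unfolding A_def by simp
    moreover have "(g0*p0 + g1*p1 + gs*ps) * ((p0*F0 + p1*F1 + ps*Fs)/(p0+p1+ps)) = (A + gs*ps)*(B+ps*Fs)/(s+ps)"
      unfolding s_def A_def B_def by (simp add: algebra_simps)
    moreover have "gs*ps*Fs + A*B/s - (A + gs*ps)*(B+ps*Fs)/(s+ps) = ps*(s*gs - A)*(s*Fs - B)/((s+ps)*s)"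
    proof -
      have "s \<noteq> 0" "s + ps \<noteq> 0" using s S by auto
      then show ?thesis by (simp add: field_simps)
    qed
    ultimately show ?thesis by simp
  qed
  have "ps*(s*gs - A)*(s*Fs - B)/((s+ps)*s) \<ge> 0"
    using A B True s S by (intro divide_nonneg_pos mult_nonneg_nonneg) auto
  with eq show ?thesis by linarith
qed

lemma sum_fiber:
  fixes h :: "('v::finite \<Rightarrow> spin3) \<Rightarrow> real"
  shows "(\<Sum>X\<in>UNIV. h X) = (\<Sum>X\<in>{X. X v = Zero}. \<Sum>c\<in>UNIV. h (X(v := c)))"
proof -
  have "(\<Sum>X\<in>UNIV. h X) = (\<Sum>c\<in>UNIV. \<Sum>X\<in>{X\<in>UNIV. X v = c}. h X)"
    by (rule sum.group[symmetric]) auto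
  also have "\<dots> = (\<Sum>c\<in>UNIV. \<Sum>X\<in>{X. X v = Zero}. h (X(v := c)))"
  proof (rule sum.cong[OF refl])
    fix c
    show "(\<Sum>X\<in>{X\<in>UNIV. X v = c}. h X) = (\<Sum>X\<in>{X. X v = Zero}. h (X(v := c)))"
      by (rule sum.reindex_bij_witness[where j="\<lambda>Y. Y(v := Zero)" and i="\<lambda>X. X(v := c)"]) auto
  qed
  also have "\<dots> = (\<Sum>X\<in>{X. X v = Zero}. \<Sum>c\<in>UNIV. h (X(v := c)))"
    by (rule sum.swap)
  finally show ?thesis .
qed

lemma sum_agree:
  fixes h :: "('v::finite \<Rightarrow> spin3) \<Rightarrow> real"
  shows "(\<Sum>Y\<in>UNIV. if (\<forall>u. u \<noteq> v \<longrightarrow> Y u = X u) then h Y else 0) = (\<Sum>c\<in>UNIV. h (X(v := c)))"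
proof -
  have "(\<Sum>Y\<in>UNIV. if (\<forall>u. u \<noteq> v \<longrightarrow> Y u = X u) then h Y else 0) = (\<Sum>Y\<in>{Y. \<forall>u. u \<noteq> v \<longrightarrow> Y u = X u}. h Y)"
    by (subst sum.If_cases) auto
  also have "{Y. \<forall>u. u \<noteq> v \<longrightarrow> Y u = X u} = range (\<lambda>c. X(v := c))"
  proof (intro set_eqI iffI)
    fix Y assume "Y \<in> {Y. \<forall>u. u \<noteq> v \<longrightarrow> Y u = X u}"
    then have "Y = X(v := Y v)" by auto
    then show "Y \<in> range (\<lambda>c. X(v := c))" by blast
  qed auto
  also have "(\<Sum>Y\<in>range (\<lambda>c. X(v := c)). h Y) = (\<Sum>c\<in>UNIV. h (X(v := c)))"
  proof -
    have "inj (\<lambda>c. X(v := c))" by (auto simp: inj_def, metis fun_upd_same)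
    from sum.reindex[OF this, of h] show ?thesis by (simp add: comp_def)
  qed
  finally show ?thesis .
qed

lemma sum_delta_mult: "(\<Sum>Y\<in>UNIV. (if Y = (A::'v::finite \<Rightarrow> spin3) then q else 0) * (F Y :: real)) = q * F A"
proof -
  have "(\<lambda>Y. (if Y = A then q else 0) * F Y) = (\<lambda>Y. if Y = A then q * F A else 0)" by auto
  then show ?thesis unfolding \<open>_ = _\<close> by simp
qed

lemma card_upd_true:
  fixes \<sigma> :: "'v::finite \<Rightarrow> bool"
  shows "card {u. (\<sigma>(v := True)) u} = Suc (card {u. (\<sigma>(v := False)) u})"
proof -
  have "{u. (\<sigma>(v := True)) u} = insert v {u. (\<sigma>(v := False)) u}" by auto
  then show ?thesis by simp
qed

lemma L_pos:
  assumes "0 < \<theta>" "\<theta> < 1"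
  shows "0 < (\<Prod>u\<in>UNIV-{v}. lift1 \<theta> (contr X u) (X u))"
  using assms unfolding contr_def by (intro prod_pos) (auto intro: lift1_pos)

lemma p_vals:
  fixes X :: "'v::finite \<Rightarrow> spin3" and v and \<theta> :: real
  defines "L \<equiv> (\<Prod>u\<in>UNIV-{v}. lift1 \<theta> (contr X u) (X u))"
  shows "pi_lift \<theta> mu (X(v := Zero)) = mu ((contr X)(v := False)) * L"
    and "pi_lift \<theta> mu (X(v := One)) = mu ((contr X)(v := True)) * \<theta> * L"
    and "pi_lift \<theta> mu (X(v := Star)) = mu ((contr X)(v := True)) * (1 - \<theta>) * L"
  unfolding L_def pi_upd by auto

lemma tilt_cond:
  fixes X :: "'v::finite \<Rightarrow> spin3"
  assumes "is_distr mu" "0 < \<theta>" "\<theta> < 1"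
  shows "cond1 (tilt \<theta> mu) v (contr X) =
    pi_lift \<theta> mu (X(v := One)) / (pi_lift \<theta> mu (X(v := Zero)) + pi_lift \<theta> mu (X(v := One)))"
proof -
  define \<sigma> where "\<sigma> = contr X"
  define a where "a = mu (\<sigma>(v := False))"
  define b where "b = mu (\<sigma>(v := True))"
  define L where "L = (\<Prod>u\<in>UNIV-{v}. lift1 \<theta> (contr X u) (X u))"
  define k where "k = card {u. (\<sigma>(v := False)) u}"
  define Z where "Z = (\<Sum>\<tau>\<in>UNIV. mu \<tau> * \<theta> ^ card {v. \<tau> v})"
  have L: "L > 0" unfolding L_def by (rule L_pos[OF assms(2,3)])
  have mu0: "\<And>x. mu x \<ge> 0" using assms(1) unfolding is_distr_def by auto
  have Z: "Z > 0"
  proof -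
    have "(\<Sum>\<tau>\<in>UNIV. mu \<tau>) = 1" using assms(1) unfolding is_distr_def by auto
    then have "\<not> (\<forall>\<tau>\<in>UNIV. mu \<tau> = 0)"
    proof (intro notI)
      assume "\<forall>\<tau>\<in>UNIV. mu \<tau> = 0"
      then have "(\<Sum>\<tau>\<in>UNIV. mu \<tau>) = 0" by simp
      moreover assume "(\<Sum>\<tau>\<in>UNIV. mu \<tau>) = 1"
      ultimately show False by simp
    qed
    then obtain \<tau> where "mu \<tau> \<noteq> 0" by blast
    then have t: "mu \<tau> > 0" using mu0[of \<tau>] by auto
    have "Z \<ge> mu \<tau> * \<theta> ^ card {v. \<tau> v}" unfolding Z_def
      by (rule member_le_sum) (use mu0 assms(2) in auto)
    moreover have "mu \<tau> * \<theta> ^ card {v. \<tau> v} > 0" using t assms(2) by auto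
    ultimately show ?thesis by linarith
  qed
  have t1: "tilt \<theta> mu (\<sigma>(v := True)) = b * \<theta> ^ Suc k / Z"
    unfolding tilt_def b_def k_def Z_def card_upd_true by simp
  have t0: "tilt \<theta> mu (\<sigma>(v := False)) = a * \<theta> ^ k / Z"
    unfolding tilt_def a_def k_def Z_def by simp
  have lhs: "cond1 (tilt \<theta> mu) v \<sigma> = b * \<theta> / (b * \<theta> + a)"
  proof -
    have "cond1 (tilt \<theta> mu) v \<sigma> = (b * \<theta> ^ Suc k / Z) / (b * \<theta> ^ Suc k / Z + a * \<theta> ^ k / Z)"
      unfolding cond1_def t1 t0 ..
    also have "\<dots> = (\<theta> ^ k / Z * (b * \<theta>)) / (\<theta> ^ k / Z * (b * \<theta> + a))"
      by (simp add: ring_distribs mult.commute mult.left_commute)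
    also have "\<dots> = b * \<theta> / (b * \<theta> + a)"
      using Z assms(2) by (subst mult_divide_mult_cancel_left) auto
    finally show ?thesis .
  qed
  have rhs: "pi_lift \<theta> mu (X(v := One)) / (pi_lift \<theta> mu (X(v := Zero)) + pi_lift \<theta> mu (X(v := One)))
     = b * \<theta> / (b * \<theta> + a)"
  proof -
    have "pi_lift \<theta> mu (X(v := One)) / (pi_lift \<theta> mu (X(v := Zero)) + pi_lift \<theta> mu (X(v := One)))
      = (L * (b * \<theta>)) / (L * (b * \<theta> + a))"
      unfolding p_vals a_def b_def L_def \<sigma>_def by (simp add: ring_distribs mult.commute mult.left_commute)
    also have "\<dots> = b * \<theta> / (b * \<theta> + a)"
      using L by (subst mult_divide_mult_cancel_left) auto
    finally show ?thesis .
  qed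
  show ?thesis using lhs rhs unfolding \<sigma>_def by simp
qed

lemma p_nonneg: "is_distr mu \<Longrightarrow> 0 \<le> \<theta> \<Longrightarrow> \<theta> \<le> 1 \<Longrightarrow> 0 \<le> pi_lift \<theta> mu X"
  unfolding pi_lift_eq is_distr_def by (auto intro!: mult_nonneg_nonneg lift_prob_nonneg)

lemma conf_le_upd: "rank3 c \<le> rank3 d \<Longrightarrow> conf_le (X(v := c)) (X(v := d))"
  unfolding conf_le_def by auto

lemma sum_Omega: "(\<Sum>Y\<in>Omega p. h Y * (f Y::real)) = (\<Sum>(Y::'v::finite \<Rightarrow> spin3)\<in>UNIV. h Y * (if Y \<in> Omega p then f Y else 0))"
proof -
  have "(\<Sum>Y\<in>UNIV. h Y * (if Y \<in> Omega p then f Y else 0)) = (\<Sum>Y\<in>UNIV. if Y \<in> Omega p then h Y * f Y else 0)"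
    by (rule sum.cong) auto
  also have "\<dots> = (\<Sum>Y\<in>UNIV \<inter> Omega p. h Y * f Y)"
    by (rule sum.inter_restrict[symmetric]) simp
  finally show ?thesis by simp
qed

lemma if_mult0: "(if P then a else 0) * (b::real) = (if P then a * b else 0)"
  by simp

lemma gd_step:
  fixes mu :: "('v::finite \<Rightarrow> bool) \<Rightarrow> real"
  assumes mu: "is_distr mu" and th: "0 < \<theta>" "\<theta> < 1"
    and nu: "distr_on (Omega (pi_lift \<theta> mu)) \<nu>"
    and g: "increasing_on (Omega (pi_lift \<theta> mu)) (\<lambda>X. \<nu> X / pi_lift \<theta> mu X)"
  shows "sd_le (Omega (pi_lift \<theta> mu)) (push \<nu> (P_piGD \<theta> mu)) (push \<nu> (P_sGD \<theta> mu))"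
  unfolding sd_le_def
proof (intro allI impI)
  fix f assume f: "increasing_on (Omega (pi_lift \<theta> mu)) f"
  define p where "p = pi_lift \<theta> mu"
  define \<Omega> where "\<Omega> = Omega p"
  define F where "F Y = (if Y \<in> \<Omega> then f Y else 0)" for Y
  define n where "n = real (card (UNIV :: 'v set))"
  define q where "q v X = cond1 (tilt \<theta> mu) v (contr X)" for v X
  define Kp where "Kp v X = (\<Sum>c\<in>UNIV. p (X(v := c)) / (\<Sum>d\<in>UNIV. p (X(v := d))) * F (X(v := c)))" for v X
  define Ks where "Ks v X = (if X v = Star then F X else q v X * F (X(v := One)) + (1 - q v X) * F (X(v := Zero)))" for v X
  have conv: "(\<Sum>Y\<in>\<Omega>. push \<nu> P Y * f Y) = (\<Sum>X\<in>UNIV. \<nu> X * (\<Sum>Y\<in>UNIV. P X Y * F Y))" for P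
  proof -
    have "(\<Sum>Y\<in>\<Omega>. push \<nu> P Y * f Y) = (\<Sum>Y\<in>UNIV. push \<nu> P Y * F Y)"
      unfolding F_def \<Omega>_def by (rule sum_Omega)
    also have "\<dots> = (\<Sum>Y\<in>UNIV. \<Sum>X\<in>UNIV. \<nu> X * (P X Y * F Y))"
      unfolding push_def by (simp add: sum_distrib_right mult.assoc)
    also have "\<dots> = (\<Sum>X\<in>UNIV. \<nu> X * (\<Sum>Y\<in>UNIV. P X Y * F Y))"
      by (subst sum.swap) (simp add: sum_distrib_left)
    finally show ?thesis .
  qed
  have Kp: "(\<Sum>Y\<in>UNIV. P_piGD \<theta> mu X Y * F Y) = 1 / n * (\<Sum>v\<in>UNIV. Kp v X)" for X
  proof -
    have "(\<Sum>Y\<in>UNIV. P_piGD \<theta> mu X Y * F Y) = 1 / n * (\<Sum>v\<in>UNIV. \<Sum>Y\<in>UNIV.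
       if (\<forall>u. u \<noteq> v \<longrightarrow> Y u = X u) then p Y / (\<Sum>c\<in>UNIV. p (X(v := c))) * F Y else 0)"
    proof -
      have "P_piGD \<theta> mu X Y * F Y = 1 / n * (\<Sum>v\<in>UNIV.
       if (\<forall>u. u \<noteq> v \<longrightarrow> Y u = X u) then p Y / (\<Sum>c\<in>UNIV. p (X(v := c))) * F Y else 0)" for Y
        unfolding P_piGD_def n_def p_def by (simp only: mult.assoc sum_distrib_right if_mult0)
      then show ?thesis by (simp only: sum_distrib_left[symmetric]) (subst sum.swap, rule refl)
    qed
    also have "\<dots> = 1 / n * (\<Sum>v\<in>UNIV. Kp v X)"
      unfolding Kp_def sum_agree ..
    finally show ?thesis .
  qed
  have Ks: "(\<Sum>Y\<in>UNIV. P_sGD \<theta> mu X Y * F Y) = 1 / n * (\<Sum>v\<in>UNIV. Ks v X)" for X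
  proof -
    have "(\<Sum>Y\<in>UNIV. P_sGD \<theta> mu X Y * F Y) = 1 / n * (\<Sum>v\<in>UNIV. \<Sum>Y\<in>UNIV.
       (if X v = Star then (if Y = X then 1 else 0)
        else (if Y = X(v := One) then q v X else 0) + (if Y = X(v := Zero) then 1 - q v X else 0)) * F Y)"
      unfolding P_sGD_def n_def q_def Let_def
      by (subst sum.swap) (simp add: sum_distrib_left sum_distrib_right mult.assoc)
    also have "\<dots> = 1 / n * (\<Sum>v\<in>UNIV. Ks v X)"
      unfolding Ks_def
    proof (intro arg_cong[where f="\<lambda>x. 1 / n * x"] sum.cong refl)
      fix v
      show "(\<Sum>Y\<in>UNIV.
       (if X v = Star then (if Y = X then 1 else 0)
        else (if Y = X(v := One) then q v X else 0) + (if Y = X(v := Zero) then 1 - q v X else 0)) * F Y)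
        = (if X v = Star then F X else q v X * F (X(v := One)) + (1 - q v X) * F (X(v := Zero)))"
      proof (cases "X v = Star")
        case True
        show ?thesis using sum_delta_mult[of X 1 F] by (simp only: if_P[OF True] mult_1)
      next
        case False
        show ?thesis by (simp only: if_not_P[OF False] distrib_right sum.distrib sum_delta_mult)
      qed
    qed
    finally show ?thesis .
  qed
  have pnn: "p Y \<ge> 0" for Y unfolding p_def using p_nonneg[OF mu] th by auto
  have Om: "Y \<in> \<Omega> \<longleftrightarrow> p Y > 0" for Y unfolding \<Omega>_def Omega_def by simp
  have nuE: "\<nu> Y = \<nu> Y / p Y * p Y" for Y
  proof (cases "p Y > 0")
    case False
    then have "Y \<notin> \<Omega>" using Om by auto
    then have "\<nu> Y = 0" using nu unfolding distr_on_def \<Omega>_def p_def by auto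
    then show ?thesis by simp
  qed simp
  have gmono: "\<nu> Y / p Y \<le> \<nu> Y' / p Y'" if "p Y > 0" "p Y' > 0" "conf_le Y Y'" for Y Y'
    using g that Om unfolding increasing_on_def \<Omega>_def p_def by auto
  have Fmono: "F Y \<le> F Y'" if "p Y > 0" "p Y' > 0" "conf_le Y Y'" for Y Y'
    using f that Om unfolding increasing_on_def \<Omega>_def p_def F_def by auto
  have fiber: "(\<Sum>c\<in>UNIV. \<nu> (X(v := c)) * Kp v (X(v := c))) \<le> (\<Sum>c\<in>UNIV. \<nu> (X(v := c)) * Ks v (X(v := c)))" for v X
  proof -
    define p0 where "p0 = p (X(v := Zero))"
    define p1 where "p1 = p (X(v := One))"
    define ps where "ps = p (X(v := Star))"
    define g0 where "g0 = \<nu> (X(v := Zero)) / p0"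
    define g1 where "g1 = \<nu> (X(v := One)) / p1"
    define gs where "gs = \<nu> (X(v := Star)) / ps"
    define F0 where "F0 = F (X(v := Zero))"
    define F1 where "F1 = F (X(v := One))"
    define Fs where "Fs = F (X(v := Star))"
    have n0: "\<nu> (X(v := Zero)) = g0 * p0" unfolding g0_def p0_def by (rule nuE)
    have n1: "\<nu> (X(v := One)) = g1 * p1" unfolding g1_def p1_def by (rule nuE)
    have ns: "\<nu> (X(v := Star)) = gs * ps" unfolding gs_def ps_def by (rule nuE)
    define Q where "Q = p1 / (p0 + p1)"
    have qv: "q v (X(v := c)) = Q" for c
      unfolding q_def p0_def p1_def p_def Q_def using tilt_cond[OF mu th, of v "X(v := c)"] by simp
    define K where "K = (p0*F0 + p1*F1 + ps*Fs) / (p0 + p1 + ps)"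
    have Kpv: "Kp v (X(v := c)) = K" for c
      unfolding Kp_def p0_def p1_def ps_def F0_def F1_def Fs_def K_def
      by (simp add: UNIV_spin3 add_divide_distrib add.assoc)
    have L: "(\<Sum>c\<in>UNIV. \<nu> (X(v := c)) * Kp v (X(v := c)))
       = (g0*p0 + g1*p1 + gs*ps) * K"
      unfolding Kpv by (simp add: UNIV_spin3 n0 n1 ns distrib_right)
    have R: "(\<Sum>c\<in>UNIV. \<nu> (X(v := c)) * Ks v (X(v := c)))
       = gs*ps*Fs + (g0*p0+g1*p1)*(Q*F1 + (1 - Q)*F0)"
      unfolding Ks_def qv by (simp add: UNIV_spin3 n0 n1 ns F0_def F1_def Fs_def algebra_simps)
    have pp: "ps > 0 \<longleftrightarrow> p1 > 0"
    proof -
      have "mu ((contr X)(v := True)) \<ge> 0" using mu unfolding is_distr_def by auto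
      moreover have "(\<Prod>u\<in>UNIV-{v}. lift1 \<theta> (contr X u) (X u)) > 0" by (rule L_pos[OF th])
      ultimately show ?thesis unfolding ps_def p1_def p_def p_vals using th
        by (auto simp: zero_less_mult_iff)
    qed
    have r01: "rank3 Zero \<le> rank3 One" "rank3 One \<le> rank3 Star" by auto
    show ?thesis unfolding L R K_def Q_def
    proof (rule key_ineq)
      show "p0 \<ge> 0" "p1 \<ge> 0" "ps \<ge> 0" unfolding p0_def p1_def ps_def by (rule pnn)+
      show "ps > 0 \<longleftrightarrow> p1 > 0" by (rule pp)
      show "g1 \<le> gs" if a: "ps > 0"
      proof -
        have b: "p1 > 0" using pp a by simp
        show ?thesis unfolding g1_def gs_def p1_def ps_def
          by (rule gmono[OF b[unfolded p1_def] a[unfolded ps_def] conf_le_upd[OF r01(2)]])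
      qed
      show "F1 \<le> Fs" if a: "ps > 0"
      proof -
        have b: "p1 > 0" using pp a by simp
        show ?thesis unfolding F1_def Fs_def
          by (rule Fmono[OF b[unfolded p1_def] a[unfolded ps_def] conf_le_upd[OF r01(2)]])
      qed
      show "g0 \<le> g1" if a: "p0 > 0" and b: "p1 > 0"
        unfolding g0_def g1_def p0_def p1_def
        by (rule gmono[OF a[unfolded p0_def] b[unfolded p1_def] conf_le_upd[OF r01(1)]])
      show "F0 \<le> F1" if a: "p0 > 0" and b: "p1 > 0"
        unfolding F0_def F1_def
        by (rule Fmono[OF a[unfolded p0_def] b[unfolded p1_def] conf_le_upd[OF r01(1)]])
    qed
  qed
  have perv: "(\<Sum>X\<in>UNIV. \<nu> X * Kp v X) \<le> (\<Sum>X\<in>UNIV. \<nu> X * Ks v X)" for v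
    by (subst (1 2) sum_fiber[of _ v]) (intro sum_mono fiber)
  have "(\<Sum>X\<in>UNIV. \<nu> X * (1 / n * (\<Sum>v\<in>UNIV. Kp v X))) = 1 / n * (\<Sum>v\<in>UNIV. \<Sum>X\<in>UNIV. \<nu> X * Kp v X)"
    by (subst sum.swap) (simp add: sum_distrib_left mult.left_commute)
  also have "\<dots> \<le> 1 / n * (\<Sum>v\<in>UNIV. \<Sum>X\<in>UNIV. \<nu> X * Ks v X)"
    unfolding n_def by (intro mult_left_mono sum_mono perv) auto
  also have "\<dots> = (\<Sum>X\<in>UNIV. \<nu> X * (1 / n * (\<Sum>v\<in>UNIV. Ks v X)))"
    by (subst sum.swap) (simp add: sum_distrib_left mult.left_commute)
  finally show "(\<Sum>Y\<in>Omega (pi_lift \<theta> mu). push \<nu> (P_piGD \<theta> mu) Y * f Y)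
      \<le> (\<Sum>Y\<in>Omega (pi_lift \<theta> mu). push \<nu> (P_sGD \<theta> mu) Y * f Y)"
    unfolding \<Omega>_def[unfolded p_def, symmetric] conv Kp Ks .
qed

lemma push_mprod: "push \<nu> (mprod P Q) = push (push \<nu> P) Q"
  unfolding push_def mprod_def
  by (rule ext) (simp add: sum_distrib_left sum_distrib_right mult.assoc, subst sum.swap, rule refl)

lemma conf_le_trans: "conf_le X Y \<Longrightarrow> conf_le Y Z \<Longrightarrow> conf_le X Z"
  unfolding conf_le_def using order_trans by blast

lemma conf_le_refl: "conf_le X X"
  unfolding conf_le_def by auto

definition ext_g :: "('v \<Rightarrow> spin3) set \<Rightarrow> (('v::finite \<Rightarrow> spin3) \<Rightarrow> real) \<Rightarrow> ('v \<Rightarrow> spin3) \<Rightarrow> real" where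
  "ext_g S g X = Max (insert 0 (g ` {Y. Y \<in> S \<and> conf_le Y X}))"

lemma ext_g_nonneg: "ext_g S g X \<ge> 0"
  unfolding ext_g_def by (rule Max_ge) auto

lemma ext_g_mono: "conf_le X X' \<Longrightarrow> ext_g S g X \<le> ext_g S g X'"
  unfolding ext_g_def
  by (rule Max_mono) (auto intro: conf_le_trans)

lemma ext_g_eq:
  assumes "increasing_on S g" "X \<in> S"
  shows "ext_g S g X = g X"
  unfolding ext_g_def
proof (rule Max_eqI)
  show "g X \<in> insert 0 (g ` {Y. Y \<in> S \<and> conf_le Y X})" using assms(2) conf_le_refl by auto
  fix y assume "y \<in> insert 0 (g ` {Y. Y \<in> S \<and> conf_le Y X})"
  then show "y \<le> g X" using assms unfolding increasing_on_def by auto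
qed simp

definition Gfun :: "real \<Rightarrow> (('v::finite \<Rightarrow> spin3) \<Rightarrow> real) \<Rightarrow> ('v \<Rightarrow> bool) \<Rightarrow> real" where
  "Gfun \<theta> h \<sigma> = (\<Sum>X\<in>UNIV. h X * lift_prob \<theta> \<sigma> X)"

lemma Gfun_step:
  fixes h :: "('v::finite \<Rightarrow> spin3) \<Rightarrow> real"
  assumes hm: "\<And>X Y. conf_le X Y \<Longrightarrow> h X \<le> h Y" and th: "0 \<le> \<theta>" "\<theta> \<le> 1"
    and sv: "\<not> \<sigma> v"
  shows "Gfun \<theta> h \<sigma> \<le> Gfun \<theta> h (\<sigma>(v := True))"
proof -
  define R where "R X = (\<Prod>u\<in>UNIV-{v}. lift1 \<theta> (\<sigma> u) (X u))" for X
  have R: "(\<Prod>u\<in>UNIV-{v}. lift1 \<theta> ((\<sigma>(v := True)) u) (X u)) = R X" for X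
    unfolding R_def by (rule prod.cong) auto
  have Rnn: "R X \<ge> 0" for X unfolding R_def using th by (intro prod_nonneg) (auto intro: lift1_nonneg)
  have "Gfun \<theta> h \<sigma> = (\<Sum>X\<in>{X. X v = Zero}. \<Sum>c\<in>UNIV. h (X(v := c)) * lift_prob \<theta> \<sigma> (X(v := c)))"
    unfolding Gfun_def by (rule sum_fiber)
  also have "\<dots> = (\<Sum>X\<in>{X. X v = Zero}. h (X(v := Zero)) * R X)"
    using sv unfolding lift_prob_upd R_def by (simp add: UNIV_spin3)
  also have "\<dots> \<le> (\<Sum>X\<in>{X. X v = Zero}. (\<theta> * h (X(v := One)) + (1 - \<theta>) * h (X(v := Star))) * R X)"
  proof (rule sum_mono)
    fix X
    have "h (X(v := Zero)) \<le> h (X(v := One))" "h (X(v := Zero)) \<le> h (X(v := Star))"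
      by (auto intro!: hm conf_le_upd)
    then have "h (X(v := Zero)) \<le> \<theta> * h (X(v := One)) + (1 - \<theta>) * h (X(v := Star))"
    proof -
      have "\<theta> * h (X(v := Zero)) \<le> \<theta> * h (X(v := One))"
        using th \<open>h (X(v := Zero)) \<le> h (X(v := One))\<close> by (rule_tac mult_left_mono) auto
      moreover have "(1 - \<theta>) * h (X(v := Zero)) \<le> (1 - \<theta>) * h (X(v := Star))"
        using th \<open>h (X(v := Zero)) \<le> h (X(v := Star))\<close> by (rule_tac mult_left_mono) auto
      ultimately show ?thesis by (simp add: algebra_simps)
    qed
    then show "h (X(v := Zero)) * R X \<le> (\<theta> * h (X(v := One)) + (1 - \<theta>) * h (X(v := Star))) * R X"
      using Rnn by (rule mult_right_mono)
  qed
  also have "\<dots> = (\<Sum>X\<in>{X. X v = Zero}. \<Sum>c\<in>UNIV. h (X(v := c)) * lift_prob \<theta> (\<sigma>(v := True)) (X(v := c)))"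
    unfolding lift_prob_upd R by (simp add: UNIV_spin3 algebra_simps)
  also have "\<dots> = Gfun \<theta> h (\<sigma>(v := True))"
    unfolding Gfun_def by (rule sum_fiber[symmetric])
  finally show ?thesis .
qed

lemma Gfun_mono_aux:
  fixes h :: "('v::finite \<Rightarrow> spin3) \<Rightarrow> real"
  assumes hm: "\<And>X Y. conf_le X Y \<Longrightarrow> h X \<le> h Y" and th: "0 \<le> \<theta>" "\<theta> \<le> 1"
  shows "finite D \<Longrightarrow> Gfun \<theta> h \<sigma> \<le> Gfun \<theta> h (\<lambda>u. \<sigma> u \<or> u \<in> D)"
proof (induction D rule: finite_induct)
  case empty
  then show ?case by simp
next
  case (insert x D)
  show ?case
  proof (cases "\<sigma> x \<or> x \<in> D")
    case True
    then have "(\<lambda>u. \<sigma> u \<or> u \<in> insert x D) = (\<lambda>u. \<sigma> u \<or> u \<in> D)" by auto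
    then show ?thesis using insert.IH by simp
  next
    case False
    have "(\<lambda>u. \<sigma> u \<or> u \<in> insert x D) = (\<lambda>u. \<sigma> u \<or> u \<in> D)(x := True)" by (rule ext) auto
    moreover have "Gfun \<theta> h (\<lambda>u. \<sigma> u \<or> u \<in> D) \<le> Gfun \<theta> h ((\<lambda>u. \<sigma> u \<or> u \<in> D)(x := True))"
      by (rule Gfun_step[OF hm th]) (use False in auto)
    ultimately show ?thesis using insert.IH by simp
  qed
qed

lemma Gfun_mono:
  fixes h :: "('v::finite \<Rightarrow> spin3) \<Rightarrow> real"
  assumes hm: "\<And>X Y. conf_le X Y \<Longrightarrow> h X \<le> h Y" and th: "0 \<le> \<theta>" "\<theta> \<le> 1"
    and le: "\<And>u. \<sigma> u \<Longrightarrow> \<sigma>' u"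
  shows "Gfun \<theta> h \<sigma> \<le> Gfun \<theta> h \<sigma>'"
proof -
  have "\<sigma>' = (\<lambda>u. \<sigma> u \<or> u \<in> {u. \<sigma>' u})" using le by auto
  then show ?thesis using Gfun_mono_aux[OF hm th, where D="{u. \<sigma>' u}" and \<sigma>=\<sigma>] by simp
qed

lemma cl_step:
  fixes mu :: "('v::finite \<Rightarrow> bool) \<Rightarrow> real"
  assumes mu: "is_distr mu" and th: "0 < \<theta>" "\<theta> < 1"
    and nu: "distr_on (Omega (pi_lift \<theta> mu)) \<nu>"
    and g: "increasing_on (Omega (pi_lift \<theta> mu)) (\<lambda>X. \<nu> X / pi_lift \<theta> mu X)"
  shows "distr_on (Omega (pi_lift \<theta> mu)) (push \<nu> (P_cl \<theta>))
     \<and> increasing_on (Omega (pi_lift \<theta> mu)) (\<lambda>X. push \<nu> (P_cl \<theta>) X / pi_lift \<theta> mu X)"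
proof -
  define p where "p = pi_lift \<theta> mu"
  define \<Omega> where "\<Omega> = Omega p"
  define \<nu>' where "\<nu>' = push \<nu> (P_cl \<theta>)"
  define gg where "gg X = \<nu> X / p X" for X
  define h where "h = ext_g \<Omega> gg"
  have mu0: "mu x \<ge> 0" for x using mu unfolding is_distr_def by auto
  have pE: "p Y = mu (contr Y) * lift_prob \<theta> (contr Y) Y" for Y unfolding p_def by (rule pi_lift_eq)
  have lpos: "lift_prob \<theta> (contr Y) Y > 0" for Y by (rule lift_prob_pos[OF th])
  have lnn: "lift_prob \<theta> \<sigma> Y \<ge> 0" for \<sigma> Y using th by (intro lift_prob_nonneg) auto
  have Om: "Y \<in> \<Omega> \<longleftrightarrow> mu (contr Y) > 0" for Y
    unfolding \<Omega>_def Omega_def pE using lpos[of Y] mu0[of "contr Y"] by (auto simp: zero_less_mult_iff)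
  have nu0: "\<nu> X \<ge> 0" for X using nu unfolding distr_on_def by auto
  have nuout: "X \<notin> \<Omega> \<Longrightarrow> \<nu> X = 0" for X using nu unfolding distr_on_def \<Omega>_def p_def by auto
  have ginc: "increasing_on \<Omega> gg" using g unfolding \<Omega>_def p_def gg_def .
  have hm: "conf_le X Y \<Longrightarrow> h X \<le> h Y" for X Y unfolding h_def by (rule ext_g_mono)
  have hnn: "h X \<ge> 0" for X unfolding h_def by (rule ext_g_nonneg)
  have \<nu>'E: "\<nu>' Y = (\<Sum>X\<in>UNIV. \<nu> X * lift_prob \<theta> (contr X) Y)" for Y
    unfolding \<nu>'_def push_def P_cl_def ..
  have \<nu>'nn: "\<nu>' Y \<ge> 0" for Y unfolding \<nu>'E using nu0 lnn by (intro sum_nonneg mult_nonneg_nonneg)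
  have \<nu>'out: "\<nu>' Y = 0" if "Y \<notin> \<Omega>" for Y
  proof -
    have "\<nu> X * lift_prob \<theta> (contr X) Y = 0" for X
    proof (cases "contr X = contr Y")
      case True
      then have "X \<notin> \<Omega>" using that Om by simp
      then show ?thesis using nuout by simp
    next
      case False
      then show ?thesis using lift_prob_zero[of "contr X" Y] by simp
    qed
    then show ?thesis unfolding \<nu>'E by (intro sum.neutral) auto
  qed
  have \<nu>'sum: "(\<Sum>Y\<in>\<Omega>. \<nu>' Y) = 1"
  proof -
    have "(\<Sum>Y\<in>\<Omega>. \<nu>' Y) = (\<Sum>Y\<in>UNIV. \<nu>' Y)"
      by (rule sum.mono_neutral_left) (use \<nu>'out in auto)
    also have "\<dots> = (\<Sum>X\<in>UNIV. \<nu> X * (\<Sum>Y\<in>UNIV. lift_prob \<theta> (contr X) Y))"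
      unfolding \<nu>'E by (subst sum.swap) (simp add: sum_distrib_left)
    also have "\<dots> = (\<Sum>X\<in>UNIV. \<nu> X)" by (simp add: lift_prob_sum)
    also have "\<dots> = (\<Sum>X\<in>\<Omega>. \<nu> X)"
      by (rule sum.mono_neutral_right) (use nuout in auto)
    also have "\<dots> = 1" using nu unfolding distr_on_def \<Omega>_def p_def by auto
    finally show ?thesis .
  qed
  have ratio: "\<nu>' Y / p Y = Gfun \<theta> h (contr Y)" if Y: "Y \<in> \<Omega>" for Y
  proof -
    define \<sigma> where "\<sigma> = contr Y"
    have tm: "\<nu> X * lift_prob \<theta> (contr X) Y = p Y * (h X * lift_prob \<theta> \<sigma> X)" for X
    proof (cases "contr X = \<sigma>")
      case True
      have XO: "X \<in> \<Omega>" using Y Om True unfolding \<sigma>_def by simp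
      have "h X = gg X" unfolding h_def by (rule ext_g_eq[OF ginc XO])
      moreover have "\<nu> X = gg X * p X"
        using XO nuout unfolding gg_def \<Omega>_def Omega_def by auto
      ultimately show ?thesis using True unfolding pE[of X] pE[of Y] \<sigma>_def by simp
    next
      case False
      then show ?thesis using lift_prob_zero[of \<sigma> X] lift_prob_zero[of "contr X" Y] unfolding \<sigma>_def by auto
    qed
    have "\<nu>' Y = p Y * Gfun \<theta> h \<sigma>"
      unfolding \<nu>'E tm Gfun_def by (simp add: sum_distrib_left)
    moreover have "p Y > 0" using Y unfolding \<Omega>_def Omega_def by simp
    ultimately show ?thesis unfolding \<sigma>_def by simp
  qed
  have inc: "increasing_on \<Omega> (\<lambda>X. \<nu>' X / p X)"
    unfolding increasing_on_def
  proof (intro conjI ballI impI)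
    fix X assume "X \<in> \<Omega>"
    then show "\<nu>' X / p X \<ge> 0" unfolding ratio[OF \<open>X \<in> \<Omega>\<close>] Gfun_def
      using hnn lnn by (intro sum_nonneg mult_nonneg_nonneg)
  next
    fix X Y assume XY: "X \<in> \<Omega>" "Y \<in> \<Omega>" "conf_le X Y"
    have "contr X u \<Longrightarrow> contr Y u" for u
      using XY(3) unfolding conf_le_def contr_def
      by (metis rank3.simps(1) le_zero_eq rank3.elims spin3.distinct(1) spin3.distinct(3) zero_neq_one nat.distinct(1) numeral_2_eq_2)
    then show "\<nu>' X / p X \<le> \<nu>' Y / p Y" unfolding ratio[OF XY(1)] ratio[OF XY(2)]
      using th by (intro Gfun_mono hm) auto
  qed
  have dis: "distr_on \<Omega> \<nu>'" unfolding distr_on_def using \<nu>'nn \<nu>'out \<nu>'sum by auto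
  show ?thesis using dis inc unfolding \<nu>'_def \<Omega>_def p_def by simp
qed

theorem lemma3p6:
  fixes mu :: "('v::finite \<Rightarrow> bool) \<Rightarrow> real" and \<theta> :: real and T2 t :: nat
  assumes "monotone_system mu"
    and "0 < \<theta>" and "\<theta> < 1"
    and "T2 \<ge> 1" and "t \<ge> 1"
  shows "mc_le (pi_lift \<theta> mu) (P_pimGD \<theta> mu T2 t) (P_alg \<theta> mu T2 t)"
proof -
  have mu: "is_distr mu" using assms(1) unfolding monotone_system_def by auto
  note th = assms(2,3)
  show ?thesis unfolding mc_le_def
  proof (intro allI impI)
    fix \<nu> assume a: "distr_on (Omega (pi_lift \<theta> mu)) \<nu> \<and> increasing_on (Omega (pi_lift \<theta> mu)) (\<lambda>X. \<nu> X / pi_lift \<theta> mu X)"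
    show "sd_le (Omega (pi_lift \<theta> mu)) (push \<nu> (P_pimGD \<theta> mu T2 t)) (push \<nu> (P_alg \<theta> mu T2 t))"
    proof (cases "(t - 1) mod T2 = 0")
      case True
      have c: "distr_on (Omega (pi_lift \<theta> mu)) (push \<nu> (P_cl \<theta>))
        \<and> increasing_on (Omega (pi_lift \<theta> mu)) (\<lambda>X. push \<nu> (P_cl \<theta>) X / pi_lift \<theta> mu X)"
        using a by (intro cl_step[OF mu th]) auto
      show ?thesis using True gd_step[OF mu th conjunct1[OF c] conjunct2[OF c]]
        unfolding P_pimGD_def P_alg_def by (simp add: push_mprod)
    next
      case False
      show ?thesis using False gd_step[OF mu th conjunct1[OF a] conjunct2[OF a]]
        unfolding P_pimGD_def P_alg_def by simp
    qed
  qed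
qed

end
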